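(* Let $X$ be a Baire space and $(Z,d)$ a metric space. Let $f_n:X\to Z$ ($n\in\mathbb N$) be quasicontinuous mappings and $f:X\to Z$ a mapping. Suppose that for each $x\in X$, $f(x)$ is a cluster point of the sequence $(f_n(x))_{n\in\mathbb N}$, and that for each $x$ in a given dense Baire subspace $A$ of $X$, $(f_n(x))_{n\in\mathbb N}$ converges to $f(x)$. Then for each $x\in A$ the following are equivalent: (1) the sequence $(f_n)_{n\in\mathbb N}$ is equi-quasicontinuous at $x$; (2) $f$ is quasicontinuous at $x$.
   Context: A mapping $g:X\to Z$ is quasicontinuous at $a$ if for each neighborhood $U$ of $a$ and each neighborhood $W$ of $g(a)$ there is an open $O$ with $\emptyset\ne O\subset U$ and $g(O)\subset W$; quasicontinuous means at every point. A sequence $(f_n)$ of mappings $X\to Z$ is equi-quasicontinuous at $x\in X$ if for each neighborhood $U$ of $x$ and each $\varepsilon>0$ there are an open set $O\subset X$ with $\emptyset\ne O\subset U$ and $n_0\in\mathbb N$ such that $d(f_n(x),f_n(y))<\varepsilon$ for every $n\ge n_0$ and every $y\in O$. *)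

theory Defs
  imports "HOL-Analysis.Analysis"
begin

definition baire_space :: "'a topology \<Rightarrow> bool" where
  "baire_space T \<longleftrightarrow>
     (\<forall>U :: nat \<Rightarrow> 'a set.
        (\<forall>n. openin T (U n) \<and> T closure_of (U n) = topspace T)
        \<longrightarrow> T closure_of (\<Inter>n. U n) = topspace T)"

definition quasicontinuous_at :: "('a::topological_space \<Rightarrow> 'b::topological_space) \<Rightarrow> 'a \<Rightarrow> bool" where
  "quasicontinuous_at g a \<longleftrightarrow>
     (\<forall>U W. open U \<and> a \<in> U \<and> open W \<and> g a \<in> W \<longrightarrow>
        (\<exists>V. open V \<and> V \<noteq> {} \<and> V \<subseteq> U \<and> g ` V \<subseteq> W))"

definition quasicontinuous :: "('a::topological_space \<Rightarrow> 'b::topological_space) \<Rightarrow> bool" where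
  "quasicontinuous g \<longleftrightarrow> (\<forall>a. quasicontinuous_at g a)"

definition equi_quasicontinuous_at :: "(nat \<Rightarrow> 'a::topological_space \<Rightarrow> 'b::metric_space) \<Rightarrow> 'a \<Rightarrow> bool" where
  "equi_quasicontinuous_at fs x \<longleftrightarrow>
     (\<forall>U e. open U \<and> x \<in> U \<and> e > 0 \<longrightarrow>
        (\<exists>V n0. open V \<and> V \<noteq> {} \<and> V \<subseteq> U \<and>
           (\<forall>n\<ge>n0. \<forall>y\<in>V. dist (fs n x) (fs n y) < e)))"

definition cluster_point_seq :: "'b::topological_space \<Rightarrow> (nat \<Rightarrow> 'b) \<Rightarrow> bool" where
  "cluster_point_seq z s \<longleftrightarrow>
     (\<forall>W. open W \<and> z \<in> W \<longrightarrow> (\<exists>\<^sub>F n in sequentially. s n \<in> W))"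

end

theory Submission
  imports Defs
begin

lemma dir1:
  fixes fs :: "nat \<Rightarrow> 'a::topological_space \<Rightarrow> 'b::metric_space"
    and f :: "'a \<Rightarrow> 'b"
  assumes cluster: "\<And>x. cluster_point_seq (f x) (\<lambda>n. fs n x)"
    and cx: "(\<lambda>n. fs n x) \<longlonglongrightarrow> f x"
    and eq: "equi_quasicontinuous_at fs x"
  shows "quasicontinuous_at f x"
  unfolding quasicontinuous_at_def
proof (intro allI impI)
  fix U W assume h: "open U \<and> x \<in> U \<and> open W \<and> f x \<in> W"
  then obtain e where e: "e > 0" "ball (f x) e \<subseteq> W" by (meson openE)
  have "\<forall>\<^sub>F n in sequentially. dist (fs n x) (f x) < e/3"
    using tendstoD[OF cx, of "e/3"] e(1) by simp
  then obtain N1 where N1: "\<And>n. n \<ge> N1 \<Longrightarrow> dist (fs n x) (f x) < e/3"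
    by (auto simp: eventually_sequentially)
  obtain V n0 where V: "open V" "V \<noteq> {}" "V \<subseteq> U"
    and Vd: "\<And>n y. n \<ge> n0 \<Longrightarrow> y \<in> V \<Longrightarrow> dist (fs n x) (fs n y) < e/3"
  proof -
    have "e/3 > 0" using e(1) by simp
    then have "\<exists>V n0. open V \<and> V \<noteq> {} \<and> V \<subseteq> U \<and>
           (\<forall>n\<ge>n0. \<forall>y\<in>V. dist (fs n x) (fs n y) < e/3)"
      using eq[unfolded equi_quasicontinuous_at_def, rule_format, of U "e/3"] h by blast
    then show ?thesis using that by blast
  qed
  have "f ` V \<subseteq> W"
  proof
    fix z assume "z \<in> f ` V"
    then obtain y where y: "y \<in> V" "z = f y" by auto
    have "\<exists>\<^sub>F n in sequentially. fs n y \<in> ball (f y) (e/3)"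
      using cluster[of y, unfolded cluster_point_seq_def, rule_format, of "ball (f y) (e/3)"] e(1) by simp
    then obtain n where n: "n \<ge> max N1 n0" "fs n y \<in> ball (f y) (e/3)"
      unfolding frequently_sequentially by blast
    have a: "dist (fs n x) (f x) < e/3" using N1 n by auto
    have b: "dist (fs n x) (fs n y) < e/3" using Vd n y by auto
    have c: "dist (f y) (fs n y) < e/3" using n by auto
    have t1: "dist (f x) (f y) \<le> dist (f x) (fs n x) + dist (fs n x) (f y)" by (rule dist_triangle)
    have t2: "dist (fs n x) (f y) \<le> dist (fs n x) (fs n y) + dist (fs n y) (f y)" by (rule dist_triangle)
    have "dist (f x) (fs n x) < e/3" using a by (simp add: dist_commute)
    moreover have "dist (fs n y) (f y) < e/3" using c by (simp add: dist_commute)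
    ultimately have "dist (f x) (f y) < e" using t1 t2 b by linarith
    then show "z \<in> W" using e y by auto
  qed
  then show "\<exists>V. open V \<and> V \<noteq> {} \<and> V \<subseteq> U \<and> f ` V \<subseteq> W" using V by blast
qed

lemma dir2:
  fixes fs :: "nat \<Rightarrow> 'a::topological_space \<Rightarrow> 'b::metric_space"
    and f :: "'a \<Rightarrow> 'b"
    and A :: "'a set"
  assumes qc: "\<And>n. quasicontinuous (fs n)"
    and A_dense: "closure A = UNIV"
    and A_baire: "baire_space (subtopology euclidean A)"
    and conv: "\<And>x. x \<in> A \<Longrightarrow> (\<lambda>n. fs n x) \<longlonglongrightarrow> f x"
    and xA: "x \<in> A"
    and fq: "quasicontinuous_at f x"
  shows "equi_quasicontinuous_at fs x"
  unfolding equi_quasicontinuous_at_def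
proof (intro allI impI)
  fix U e assume h: "open U \<and> x \<in> U \<and> (e::real) > 0"
  obtain V1 where V1: "open V1" "V1 \<noteq> {}" "V1 \<subseteq> U" "f ` V1 \<subseteq> ball (f x) (e/8)"
  proof -
    have "e/8 > 0" using h by simp
    then have "open (ball (f x) (e/8))" "f x \<in> ball (f x) (e/8)" by auto
    then have "\<exists>V. open V \<and> V \<noteq> {} \<and> V \<subseteq> U \<and> f ` V \<subseteq> ball (f x) (e/8)"
      using fq[unfolded quasicontinuous_at_def, rule_format, of U "ball (f x) (e/8)"] h by blast
    then show ?thesis using that by blast
  qed
  define G where "G k = {y. \<forall>n\<ge>k. dist (fs n y) (f x) \<le> e/4}" for k
  define K where "K k = closure (G k) \<inter> closure V1" for k
  define D where "D k = A - K k" for k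
  have Kc: "closed (K k)" for k unfolding K_def by auto
  have "\<exists>k. subtopology euclidean A closure_of D k \<noteq> A"
  proof (rule ccontr)
    assume "\<not> ?thesis"
    then have all: "\<forall>k. subtopology euclidean A closure_of D k = A" by blast
    have "openin (subtopology euclidean A) (D k)" for k
    proof -
      have "D k = (- K k) \<inter> A" unfolding D_def by auto
      moreover have "open (- K k)" using Kc by auto
      ultimately show ?thesis using openin_subtopology_Int[of euclidean "- K k" A] by simp
    qed
    then have "subtopology euclidean A closure_of (\<Inter>k. D k) = A"
      using A_baire all unfolding baire_space_def by auto
    then have cl: "A \<subseteq> closure (\<Inter>k. D k)"
      using closure_of_subtopology_subset[of euclidean A "\<Inter>k. D k"] by auto
    have "V1 \<inter> A \<noteq> {}"
      using open_Int_closure_eq_empty[OF V1(1), of A] A_dense V1(2) by auto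
    then have "V1 \<inter> closure (\<Inter>k. D k) \<noteq> {}" using cl by auto
    then have "V1 \<inter> (\<Inter>k. D k) \<noteq> {}" using open_Int_closure_eq_empty[OF V1(1)] by auto
    then obtain y where y: "y \<in> V1" "\<And>k. y \<in> D k" by auto
    then have yA: "y \<in> A" unfolding D_def by auto
    have "\<forall>\<^sub>F n in sequentially. dist (fs n y) (f y) < e/8"
      using tendstoD[OF conv[OF yA], of "e/8"] h by simp
    then obtain k where k: "\<And>n. n \<ge> k \<Longrightarrow> dist (fs n y) (f y) < e/8"
      by (auto simp: eventually_sequentially)
    have fy: "dist (f x) (f y) < e/8" using V1(4) y(1) by auto
    have "y \<in> G k" unfolding G_def
    proof (intro CollectI allI impI)
      fix n assume "k \<le> n"
      then have "dist (fs n y) (f y) < e/8" by (rule k)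
      moreover have "dist (f y) (f x) < e/8" using fy by (simp add: dist_commute)
      ultimately show "dist (fs n y) (f x) \<le> e/4"
        using dist_triangle[of "fs n y" "f x" "f y"] by linarith
    qed
    then have "y \<in> K k" unfolding K_def using y(1) closure_subset by blast
    then show False using y(2)[of k] unfolding D_def by auto
  qed
  then obtain k where k: "subtopology euclidean A closure_of D k \<noteq> A" by blast
  have "subtopology euclidean A closure_of D k \<subseteq> A"
    by (metis closure_of_subset_topspace topspace_euclidean_subtopology)
  with k have "\<not> A \<subseteq> subtopology euclidean A closure_of D k" by auto
  moreover have "D k \<subseteq> A" unfolding D_def by auto
  ultimately obtain a where a: "a \<in> A" "a \<notin> closure (D k)"
    using closure_of_subtopology_open[of euclidean A "D k"] by auto
  define P where "P = - closure (D k)"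
  have Po: "open P" unfolding P_def by auto
  have PA: "P \<inter> A \<subseteq> K k"
  proof
    fix q assume q: "q \<in> P \<inter> A"
    then have "q \<notin> D k" using closure_subset[of "D k"] unfolding P_def by blast
    then show "q \<in> K k" using q unfolding D_def by blast
  qed
  have PK: "P \<subseteq> K k"
  proof
    fix p assume p: "p \<in> P"
    show "p \<in> K k"
    proof (rule ccontr)
      assume "p \<notin> K k"
      then have "(P - K k) \<inter> closure A \<noteq> {}" using p A_dense by auto
      then have "(P - K k) \<inter> A \<noteq> {}"
        using open_Int_closure_eq_empty[of "P - K k" A] Po Kc by auto
      then show False using PA by auto
    qed
  qed
  have "a \<in> P" using a unfolding P_def by auto
  then have "P \<inter> closure V1 \<noteq> {}" using PK unfolding K_def by auto
  then have PV: "P \<inter> V1 \<noteq> {}" using open_Int_closure_eq_empty[OF Po] by auto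
  define Q where "Q = P \<inter> V1"
  have Oo: "open Q" unfolding Q_def using Po V1(1) by auto
  have OG: "Q \<subseteq> closure (G k)" unfolding Q_def using PK unfolding K_def by auto
  have key: "dist (fs n y) (f x) \<le> e/4" if y: "y \<in> Q" and n: "n \<ge> k" for y n
  proof (rule ccontr)
    assume nt: "\<not> ?thesis"
    define r where "r = dist (fs n y) (f x)"
    have r: "r > e/4" using nt unfolding r_def by auto
    obtain O1 where O1: "open O1" "O1 \<noteq> {}" "O1 \<subseteq> Q" "fs n ` O1 \<subseteq> ball (fs n y) (r - e/4)"
    proof -
      have "r - e/4 > 0" using r by simp
      then have "open (ball (fs n y) (r - e/4))" "fs n y \<in> ball (fs n y) (r - e/4)" by auto
      then have "\<exists>V. open V \<and> V \<noteq> {} \<and> V \<subseteq> Q \<and> fs n ` V \<subseteq> ball (fs n y) (r - e/4)"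
        using qc[of n, unfolded quasicontinuous_def, rule_format, of y, unfolded quasicontinuous_at_def, rule_format, of Q "ball (fs n y) (r - e/4)"] y Oo by blast
      then show ?thesis using that by blast
    qed
    have "O1 \<inter> closure (G k) \<noteq> {}" using O1 OG by auto
    then have "O1 \<inter> G k \<noteq> {}" using open_Int_closure_eq_empty[OF O1(1)] by auto
    then obtain z where z: "z \<in> O1" "z \<in> G k" by auto
    have "dist (fs n z) (f x) \<le> e/4" using z(2) n unfolding G_def by auto
    moreover have "dist (fs n y) (fs n z) < r - e/4" using O1(4) z(1) by auto
    ultimately have "dist (fs n y) (f x) < r"
      using dist_triangle[of "fs n y" "f x" "fs n z"] by auto
    then show False unfolding r_def by auto
  qed
  have "\<forall>\<^sub>F n in sequentially. dist (fs n x) (f x) < e/2"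
    using tendstoD[OF conv[OF xA], of "e/2"] h by simp
  then obtain N1 where N1: "\<And>n. n \<ge> N1 \<Longrightarrow> dist (fs n x) (f x) < e/2"
    by (auto simp: eventually_sequentially)
  have fin: "\<forall>n\<ge>max k N1. \<forall>y\<in>Q. dist (fs n x) (fs n y) < e"
  proof (intro allI impI ballI)
    fix n y assume n: "max k N1 \<le> n" and y: "y \<in> Q"
    have "dist (fs n x) (f x) < e/2" using N1 n by auto
    moreover have "dist (fs n y) (f x) \<le> e/4" using key y n by auto
    moreover have "dist (f x) (fs n y) \<le> e/4" using calculation(2) by (simp add: dist_commute)
    ultimately show "dist (fs n x) (fs n y) < e"
      using dist_triangle[of "fs n x" "fs n y" "f x"] h by linarith
  qed
  have "Q \<noteq> {}" "Q \<subseteq> U" using PV V1(3) unfolding Q_def by auto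
  then show "\<exists>V n0. open V \<and> V \<noteq> {} \<and> V \<subseteq> U \<and>
           (\<forall>n\<ge>n0. \<forall>y\<in>V. dist (fs n x) (fs n y) < e)" using Oo fin by (intro exI[of _ Q] exI[of _ "max k N1"]) simp
qed

theorem theorem4p5:
  fixes fs :: "nat \<Rightarrow> 'a::topological_space \<Rightarrow> 'b::metric_space"
    and f :: "'a \<Rightarrow> 'b"
    and A :: "'a set"
  assumes X_baire: "baire_space (euclidean :: 'a topology)"
    and qc: "\<And>n. quasicontinuous (fs n)"
    and cluster: "\<And>x. cluster_point_seq (f x) (\<lambda>n. fs n x)"
    and A_dense: "closure A = UNIV"
    and A_baire: "baire_space (subtopology euclidean A)"
    and conv: "\<And>x. x \<in> A \<Longrightarrow> (\<lambda>n. fs n x) \<longlonglongrightarrow> f x"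
  shows "\<forall>x\<in>A. (equi_quasicontinuous_at fs x \<longleftrightarrow> quasicontinuous_at f x)"
proof
  fix x assume xA: "x \<in> A"
  show "equi_quasicontinuous_at fs x \<longleftrightarrow> quasicontinuous_at f x"
    using dir1[of f fs, OF cluster conv[OF xA]] dir2[OF qc A_dense A_baire conv xA] by blast
qed

end
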